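(* Let $h:\mathbb R^m\times\mathcal U\to\mathbb R^m$ satisfy: (i) for each $u\in\mathcal U$ the map $\Gamma_u:x\mapsto x+h(x,u)$ is a homeomorphism of $\mathbb R^m$, and its inverse $\Lambda_u$ satisfies, for a constant $K>0$, $|\Lambda_u(x)|\le K(1+|x|)$ and $|\Lambda_u(x)-\Lambda_u(y)|\le K|x-y|$ for all $x,y\in\mathbb R^m$, $u\in\mathcal U$; (ii) there exist $\sigma>0$ and $K_0\ge e$ such that for every $p\ge1$ there is a constant $C(p)$ with $$\int_{\mathcal U}|h(x,u)-h(y,u)|^{2p}\mu(du)\le C(p)\log N|x-y|^{2p}+C(p)\frac{\log N}{N^{2\sigma p}}$$ for every integer $N>K_0$ and all $|x|,|y|\le N$. For $\varepsilon>0$ set $F(x)=(\varepsilon+|x|^2)^{-1}$. Then: (1) $F(x-x'+h(x,u)-h(x',u))\le(1+K^2)F(x-x')$ for all $x,x'\in\mathbb R^m$, $u\in\mathcal U$; (2) there is a constant $c'$ independent of $\varepsilon$ such that for every integer $N>K_0$ and all $|x|,|x'|\le N$, $$\int_{\mathcal U}\Big[F(x-x'+h(x,u)-h(x',u))-F(x-x')-\langle\nabla F(x-x'),h(x,u)-h(x',u)\rangle\Big]\mu(du)\le c'\Big\{\log N\,F(x-x')+\log N\frac{F^2(x-x')}{N^{2\sigma}}+\log N\frac{F^{5/2}(x-x')}{N^{3\sigma}}\Big\}.$$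
   Context: $\mathcal U$ is a metric space with a $\sigma$-finite measure $\mu$; $|\cdot|$ is the Euclidean norm. (In the paper, condition (ii) is part of a larger assumption that also includes local Lipschitz-type bounds on $f$ and $g$; only the $h$-part enters this lemma.) *)

theory Defs
  imports "HOL-Analysis.Analysis" "HOL-Probability.Probability"
begin

definition Fe :: "real \<Rightarrow> 'a::real_normed_vector \<Rightarrow> real" where
  "Fe \<epsilon> x = inverse (\<epsilon> + (norm x)^2)"

definition grad :: "('a::real_inner \<Rightarrow> real) \<Rightarrow> 'a \<Rightarrow> 'a" where
  "grad f z = (THE D. GDERIV f z :> D)"

end

theory Submission
  imports Defs
begin

lemma gd_norm2: "GDERIV (\<lambda>w::'a::real_inner. (norm w)^2) z :> (2 *\<^sub>R z)"
proof -
  have "GDERIV (\<lambda>w::'a. w \<bullet> w) z :> (2 *\<^sub>R z)"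
    unfolding gderiv_def
    by (rule has_derivative_eq_rhs, rule has_derivative_inner[OF has_derivative_ident has_derivative_ident])
       (auto simp: inner_commute algebra_simps fun_eq_iff)
  thus ?thesis by (simp add: power2_norm_eq_inner)
qed

lemma gd_unique: "GDERIV f z :> D \<Longrightarrow> GDERIV f z :> D' \<Longrightarrow> D = D'"
proof -
  assume a: "GDERIV f z :> D" "GDERIV f z :> D'"
  have "(\<lambda>h. h \<bullet> D) = (\<lambda>h. h \<bullet> D')"
    using a unfolding gderiv_def by (rule has_derivative_unique)
  then have "(D - D') \<bullet> D = (D - D') \<bullet> D'" by metis
  then have "(D - D') \<bullet> (D - D') = 0" by (simp add: inner_diff_right)
  thus ?thesis by simp
qed

lemma grad_Fe: assumes "e > 0" shows "grad (Fe e) z = - (2 * Fe e z ^ 2) *\<^sub>R z"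
proof -
  have "GDERIV (\<lambda>w. inverse (e + (norm w)^2)) z :> - (inverse (e + (norm z)^2))\<^sup>2 *\<^sub>R (0 + 2 *\<^sub>R z)"
    apply (rule GDERIV_inverse)
     apply (rule GDERIV_add[OF GDERIV_const gd_norm2])
    using assms by (smt (verit) zero_le_power2)
  then have g: "GDERIV (Fe e) z :> - (2 * Fe e z ^ 2) *\<^sub>R z"
    by (simp add: Fe_def[abs_def] Fe_def mult.commute)
  show ?thesis unfolding grad_def using g gd_unique by blast
qed


lemma alg:
  fixes A B q n m L :: real
  assumes A: "A > 0" and B: "B > 0" and q: "\<bar>q\<bar> \<le> n * m" and n: "n \<ge> 0" "n^2 \<le> A"
    and m: "m \<ge> 0" and BL: "1/B \<le> L/A" and Bd: "B = A + (2*q + m^2)"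
  shows "\<bar>1/B - 1/A + 2*q/A^2\<bar> \<le> L * (5 * (1/A)^2 * m^2 + 2 * (1/A) powr (5/2) * m^3)"
proof -
  have eq: "1/B - 1/A + 2*q/A^2 = (4*q^2 + 2*q*m^2 - A*m^2) / (A^2 * B)"
  proof -
    have "(1/B - 1/A + 2*q/A^2) * (A^2*B) = A^2 - A*B + 2*q*B"
      using A B by (simp add: field_simps power2_eq_square)
    also have "\<dots> = 4*q^2 + 2*q*m^2 - A*m^2" unfolding Bd by (simp add: algebra_simps power2_eq_square)
    finally show ?thesis using A B by (simp add: field_simps)
  qed
  have num: "\<bar>4*q^2 + 2*q*m^2 - A*m^2\<bar> \<le> 4*n^2*m^2 + 2*n*m^3 + A*m^2"
  proof -
    have "\<bar>q\<bar>^2 \<le> (n*m)^2" using q by (intro power_mono) auto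
    then have 1: "q^2 \<le> n^2*m^2" by (simp add: power_mult_distrib)
    have 2: "\<bar>q*m^2\<bar> \<le> n*m*m^2" using q m by (simp add: abs_mult mult_right_mono)
    have 3: "\<bar>4*q^2 + 2*q*m^2 - A*m^2\<bar> \<le> 4*q^2 + 2*\<bar>q*m^2\<bar> + A*m^2"
    proof -
      have "q*m^2 \<le> \<bar>q*m^2\<bar>" "-(q*m^2) \<le> \<bar>q*m^2\<bar>" by linarith+
      moreover have "q^2 \<ge> 0" "A*m^2 \<ge> 0" using A by auto
      moreover have "2*q*m^2 = 2*(q*m^2)" by simp
      ultimately show ?thesis unfolding abs_le_iff by linarith
    qed
    have 4: "n*m*m^2 = n*m^3" by (simp add: power2_eq_square power3_eq_cube)
    show ?thesis using 1 2 3 4 by linarith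
  qed
  have Lpos: "L > 0" proof (rule ccontr)
    assume "\<not> L > 0" then have "L/A \<le> 0" using A by (simp add: divide_nonpos_pos)
    moreover have "1/B > 0" using B by simp
    ultimately show False using BL by linarith
  qed
  have "\<bar>1/B - 1/A + 2*q/A^2\<bar> = \<bar>4*q^2 + 2*q*m^2 - A*m^2\<bar> * (1/B) / A^2"
    by (simp add: eq abs_divide abs_mult) (use B in simp)
  also have "\<dots> \<le> (4*n^2*m^2 + 2*n*m^3 + A*m^2) * (L/A) / A^2"
    using num BL A B by (intro divide_right_mono mult_mono) auto
  also have "\<dots> = L * (4*n^2*m^2/A^3 + 2*n*m^3/A^3 + m^2/A^2)"
    using A by (simp add: field_simps power2_eq_square power3_eq_cube)
  also have "\<dots> \<le> L * (5 * (1/A)^2 * m^2 + 2 * (1/A) powr (5/2) * m^3)"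
  proof -
    have t1: "4*n^2*m^2/A^3 \<le> 4 * m^2 / A^2"
    proof -
      have "4*n^2*m^2/A^3 \<le> 4*A*m^2/A^3" using n m A by (intro divide_right_mono) (auto intro: mult_right_mono)
      also have "\<dots> = 4 * m^2 / A^2" using A by (simp add: power2_eq_square power3_eq_cube)
      finally show ?thesis .
    qed
    have t2: "2*n*m^3/A^3 \<le> 2 * (1/A) powr (5/2) * m^3"
    proof -
      have "n \<le> sqrt A" using n by (simp add: real_le_rsqrt)
      then have "2*n*m^3/A^3 \<le> 2 * sqrt A * m^3/A^3" using m A by (intro divide_right_mono mult_right_mono) auto
      also have "\<dots> = 2 * (1/A) powr (5/2) * m^3"
      proof -
        have "(1/A) powr (5/2) = A powr (1/2) / A^3"
        proof -
          have e1: "A powr 3 = A powr (5/2) * A powr (1/2)"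
            by (simp add: powr_add[symmetric])
          have e2: "A powr 3 = A^3" using A by (simp add: powr_realpow)
          have e3: "(1/A) powr (5/2) = 1 / A powr (5/2)" using A by (simp add: powr_divide)
          have "A powr (1/2) > 0" using A by simp
          then show ?thesis using e1 e2 e3 A by (simp add: field_simps)
        qed
        thus ?thesis using A by (simp add: powr_half_sqrt)
      qed
      finally show ?thesis .
    qed
    have "m^2/A^2 = (1/A)^2 * m^2" by (simp add: power_divide)
    then show ?thesis using t1 t2 Lpos by (intro mult_left_mono) (auto simp: power_divide)
  qed
  finally show ?thesis .
qed



lemma part1_aux:
  fixes z w :: "'a::real_normed_vector"
  assumes e: "e > 0" and K: "norm z \<le> K * norm w" and Kp: "K > 0"
  shows "Fe e w \<le> (1 + K^2) * Fe e z"
proof -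
  have "(norm z)^2 \<le> (K * norm w)^2" using K by (intro power_mono) auto
  then have z2: "(norm z)^2 \<le> K^2 * (norm w)^2" by (simp add: power_mult_distrib)
  have pA: "e + (norm z)^2 > 0" "e + (norm w)^2 > 0" using e by (simp_all add: add_pos_nonneg)
  have "e + (norm z)^2 \<le> (1 + K^2) * (e + (norm w)^2)"
    using z2 e by (simp add: algebra_simps) (smt (verit) zero_le_power2 mult_nonneg_nonneg)
  then have "1 / (e + (norm w)^2) \<le> (1 + K^2) / (e + (norm z)^2)"
    using pA by (simp add: field_simps)
  thus ?thesis by (simp add: Fe_def divide_inverse)
qed

lemma intb:
  fixes f :: "'b \<Rightarrow> real"
  assumes fm: "f \<in> borel_measurable M" and nn: "\<And>u. f u \<ge> 0"
    and b: "(\<integral>\<^sup>+ u. ennreal (f u) \<partial>M) \<le> ennreal v"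
  shows "integrable M f \<and> integral\<^sup>L M f \<le> max 0 v"
proof -
  have "(\<integral>\<^sup>+ u. ennreal (norm (f u)) \<partial>M) = (\<integral>\<^sup>+ u. ennreal (f u) \<partial>M)"
    using nn by (intro nn_integral_cong) simp
  also have "\<dots> < \<infinity>" using b by (simp add: le_less_trans)
  finally have i: "integrable M f" by (intro integrableI_bounded fm)
  have "ennreal (integral\<^sup>L M f) = (\<integral>\<^sup>+ u. ennreal (f u) \<partial>M)"
    using nn i by (intro nn_integral_eq_integral[symmetric]) auto
  also have "\<dots> \<le> ennreal (max 0 v)" using b by (meson order_trans ennreal_leI max.cobounded2)
  finally have "integral\<^sup>L M f \<le> max 0 v" by (metis ennreal_le_iff max.cobounded1)
  with i show ?thesis by simp
qed




lemma pw:
  fixes z a :: "'a::real_inner"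
  assumes e: "e > 0" and BL: "Fe e (z + a) \<le> L * Fe e z"
  shows "\<bar>Fe e (z + a) - Fe e z - grad (Fe e) z \<bullet> a\<bar>
     \<le> L * (5 * (Fe e z)^2 * (norm a)^2 + 2 * (Fe e z) powr (5/2) * (norm a)^3)"
proof -
  define A where "A = e + (norm z)^2"
  define B where "B = e + (norm (z+a))^2"
  have A: "A > 0" unfolding A_def using e by (simp add: add_pos_nonneg)
  have B: "B > 0" unfolding B_def using e by (simp add: add_pos_nonneg)
  have FA: "Fe e z = 1/A" "Fe e (z+a) = 1/B" unfolding A_def B_def Fe_def by (simp_all add: divide_inverse)
  have Bd: "B = A + (2*(z \<bullet> a) + (norm a)^2)"
    unfolding A_def B_def by (simp add: power2_norm_eq_inner inner_add algebra_simps inner_commute)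
  have q: "\<bar>z \<bullet> a\<bar> \<le> norm z * norm a" by (rule Cauchy_Schwarz_ineq2)
  have n2: "(norm z)^2 \<le> A" unfolding A_def using e by simp
  have g: "Fe e (z + a) - Fe e z - grad (Fe e) z \<bullet> a = 1/B - 1/A + 2*(z \<bullet> a)/A^2"
    using FA e by (simp add: grad_Fe power_divide)
  show ?thesis
    unfolding g unfolding FA
    by (rule alg[OF A B q norm_ge_zero n2 norm_ge_zero _ Bd]) (use BL FA in simp)
qed

lemma Fbounds:
  fixes e n :: real
  assumes e: "e > 0" and n: "n \<ge> 0"
  defines "F \<equiv> inverse (e + n^2)"
  shows "F^2 * n^2 \<le> F" "F powr (5/2) * n^3 \<le> F" "F > 0"
proof -
  have A: "e + n^2 > 0" using e by (simp add: add_pos_nonneg)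
  show Fp: "F > 0" unfolding F_def using A by simp
  have Fn: "F * n^2 \<le> 1" unfolding F_def using A e by (simp add: field_simps)
  show "F^2 * n^2 \<le> F" using Fn Fp by (simp add: power2_eq_square)
  have s: "sqrt F * n \<le> 1"
  proof -
    have "(sqrt F * n)^2 \<le> 1" using Fn Fp by (simp add: power_mult_distrib)
    then have "(sqrt F * n)^2 \<le> 1^2" by simp
    thus ?thesis by (rule power2_le_imp_le) simp
  qed
  have p: "F powr (5/2) = F^2 * sqrt F"
  proof -
    have "F powr (5/2) = F powr (2 + 1/2)" by simp
    also have "\<dots> = F powr 2 * F powr (1/2)" by (rule powr_add)
    finally show ?thesis using Fp by (simp add: powr_half_sqrt)
  qed
  have "(sqrt F * n)^3 \<le> 1" using s n Fp by (intro power_le_one) auto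
  moreover have "(sqrt F * n)^3 = (sqrt F)^2 * sqrt F * n^3"
    by (simp add: power_mult_distrib power3_eq_cube power2_eq_square)
  moreover have "(sqrt F)^2 = F" using Fp by simp
  ultimately have "F * sqrt F * n^3 \<le> 1" by simp
  then have "F * (F * sqrt F * n^3) \<le> F * 1" using Fp by (intro mult_left_mono) auto
  then show "F powr (5/2) * n^3 \<le> F" unfolding p by (simp add: power2_eq_square mult.assoc)
qed




theorem lemma4p1:
  fixes h :: "real^'m \<Rightarrow> 'u::metric_space \<Rightarrow> real^'m"
    and \<Lambda> :: "'u \<Rightarrow> real^'m \<Rightarrow> real^'m"
    and M :: "'u measure"
    and K \<sigma> K0 :: real
    and C :: "real \<Rightarrow> real"
  assumes sf: "sigma_finite_measure M"
    and meas: "\<And>x. (\<lambda>u. h x u) \<in> borel_measurable M"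
    and homeo: "\<And>u. u \<in> space M \<Longrightarrow> homeomorphism UNIV UNIV (\<lambda>x. x + h x u) (\<Lambda> u)"
    and Kpos: "K > 0"
    and Lgrowth: "\<And>u x. u \<in> space M \<Longrightarrow> norm (\<Lambda> u x) \<le> K * (1 + norm x)"
    and Llip: "\<And>u x y. u \<in> space M \<Longrightarrow> norm (\<Lambda> u x - \<Lambda> u y) \<le> K * norm (x - y)"
    and \<sigma>pos: "\<sigma> > 0"
    and K0: "K0 \<ge> exp 1"
    and hint: "\<And>p N x y. p \<ge> 1 \<Longrightarrow> real N > K0 \<Longrightarrow> norm x \<le> real N \<Longrightarrow> norm y \<le> real N \<Longrightarrow>
        (\<integral>\<^sup>+ u. ennreal (norm (h x u - h y u) powr (2 * p)) \<partial>M)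
        \<le> ennreal (C p * ln (real N) * norm (x - y) powr (2 * p)
                   + C p * ln (real N) / real N powr (2 * \<sigma> * p))"
  shows "(\<forall>\<epsilon>>0. \<forall>x x' u. u \<in> space M \<longrightarrow>
            Fe \<epsilon> (x - x' + h x u - h x' u) \<le> (1 + K^2) * Fe \<epsilon> (x - x'))
       \<and> (\<exists>c'. \<forall>\<epsilon>>0. \<forall>N::nat. \<forall>x x'.
            real N > K0 \<longrightarrow> norm x \<le> real N \<longrightarrow> norm x' \<le> real N \<longrightarrow>
            (let g = (\<lambda>u. Fe \<epsilon> (x - x' + h x u - h x' u) - Fe \<epsilon> (x - x')
                          - grad (Fe \<epsilon>) (x - x') \<bullet> (h x u - h x' u))
             in integrable M g \<and>
                (\<integral>u. g u \<partial>M) \<le> c' * (ln (real N) * Fe \<epsilon> (x - x')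
                   + ln (real N) * (Fe \<epsilon> (x - x'))^2 / real N powr (2 * \<sigma>)
                   + ln (real N) * (Fe \<epsilon> (x - x')) powr (5/2) / real N powr (3 * \<sigma>))))"
proof -
  have hm[measurable]: "\<And>x. (\<lambda>u. h x u) \<in> borel_measurable M" by (rule meas)
  define L where "L = 1 + K^2"
  have Lp: "L > 0" unfolding L_def by (simp add: add_pos_nonneg)
  have P1: "\<And>e x x' u. e > 0 \<Longrightarrow> u \<in> space M \<Longrightarrow>
            Fe e (x - x' + h x u - h x' u) \<le> L * Fe e (x - x')"
  proof -
    fix e x x' u assume e: "(e::real) > 0" and u: "u \<in> space M"
    have inv: "\<And>y. \<Lambda> u (y + h y u) = y" using homeo[OF u] by (simp add: homeomorphism_def)
    have "norm (x - x') = norm (\<Lambda> u (x + h x u) - \<Lambda> u (x' + h x' u))" by (simp add: inv)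
    also have "\<dots> \<le> K * norm ((x + h x u) - (x' + h x' u))" by (rule Llip[OF u])
    finally have "norm (x - x') \<le> K * norm (x - x' + h x u - h x' u)" by (simp add: algebra_simps)
    thus "Fe e (x - x' + h x u - h x' u) \<le> L * Fe e (x - x')"
      unfolding L_def by (rule part1_aux[OF e _ Kpos])
  qed
  show ?thesis
  proof (intro conjI)
    show "\<forall>\<epsilon>>0. \<forall>x x' u. u \<in> space M \<longrightarrow>
            Fe \<epsilon> (x - x' + h x u - h x' u) \<le> (1 + K^2) * Fe \<epsilon> (x - x')"
      using P1 unfolding L_def by blast
  next
    define c' where "c' = L * (5 * \<bar>C 1\<bar> + 2 * \<bar>C (3/2)\<bar>)"
    show "\<exists>c'. \<forall>\<epsilon>>0. \<forall>N::nat. \<forall>x x'.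
            real N > K0 \<longrightarrow> norm x \<le> real N \<longrightarrow> norm x' \<le> real N \<longrightarrow>
            (let g = (\<lambda>u. Fe \<epsilon> (x - x' + h x u - h x' u) - Fe \<epsilon> (x - x')
                          - grad (Fe \<epsilon>) (x - x') \<bullet> (h x u - h x' u))
             in integrable M g \<and>
                (\<integral>u. g u \<partial>M) \<le> c' * (ln (real N) * Fe \<epsilon> (x - x')
                   + ln (real N) * (Fe \<epsilon> (x - x'))^2 / real N powr (2 * \<sigma>)
                   + ln (real N) * (Fe \<epsilon> (x - x')) powr (5/2) / real N powr (3 * \<sigma>)))"
    proof (intro exI[of _ c'] allI impI)
      fix e :: real and N :: nat and x x' :: "real^'m"
      assume e: "e > 0" and NK: "real N > K0" and nx: "norm x \<le> real N" and nx': "norm x' \<le> real N"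
      define z where "z = x - x'"
      define a where "a = (\<lambda>u. h x u - h x' u)"
      define F where "F = Fe e z"
      define g where "g = (\<lambda>u. Fe e (x - x' + h x u - h x' u) - Fe e (x - x')
                          - grad (Fe e) (x - x') \<bullet> (h x u - h x' u))"
      define G where "G = (\<lambda>u. L * (5 * F^2 * (norm (a u))^2 + 2 * F powr (5/2) * (norm (a u))^3))"
      have am[measurable]: "a \<in> borel_measurable M" unfolding a_def by measurable
      have gm[measurable]: "g \<in> borel_measurable M" unfolding g_def Fe_def by measurable
      have gz: "\<And>u. g u = Fe e (z + a u) - Fe e z - grad (Fe e) z \<bullet> a u"
        unfolding g_def z_def a_def by (simp add: algebra_simps)
      have gG: "\<And>u. u \<in> space M \<Longrightarrow> \<bar>g u\<bar> \<le> G u"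
      proof -
        fix u assume u: "u \<in> space M"
        have "Fe e (z + a u) \<le> L * Fe e z"
          using P1[OF e u, of x x'] unfolding z_def a_def by (simp add: algebra_simps)
        from pw[OF e this] show "\<bar>g u\<bar> \<le> G u" unfolding gz G_def F_def .
      qed
      have N1: "real N > 1" using NK K0 by (smt (verit) one_less_exp_iff)
      have lnN: "ln (real N) > 0" using N1 by simp
      have Np: "real N > 0" using N1 by simp
      define n where "n = norm z"
      have n0: "n \<ge> 0" unfolding n_def by simp
      have FF: "F = inverse (e + n^2)" unfolding F_def n_def Fe_def ..
      note Fb = Fbounds[OF e n0, folded FF]
      have h1: "(\<integral>\<^sup>+ u. ennreal ((norm (a u))^2) \<partial>M)
          \<le> ennreal (C 1 * ln (real N) * n^2 + C 1 * ln (real N) / real N powr (2 * \<sigma>))"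
        using hint[of 1 N x x'] NK nx nx' unfolding a_def n_def z_def by simp
      have h3: "(\<integral>\<^sup>+ u. ennreal ((norm (a u))^3) \<partial>M)
          \<le> ennreal (C (3/2) * ln (real N) * n^3 + C (3/2) * ln (real N) / real N powr (3 * \<sigma>))"
      proof -
        have "2 * (3/2::real) = 3" by simp
        moreover have "2 * \<sigma> * (3/2) = 3 * \<sigma>" by simp
        ultimately show ?thesis
          using hint[of "3/2" N x x'] NK nx nx' unfolding a_def n_def z_def by simp
      qed
      obtain I2: "integrable M (\<lambda>u. (norm (a u))^2)"
        and B2: "(\<integral>u. (norm (a u))^2 \<partial>M) \<le> max 0 (C 1 * ln (real N) * n^2 + C 1 * ln (real N) / real N powr (2 * \<sigma>))"
        using intb[OF _ _ h1] by auto
      obtain I3: "integrable M (\<lambda>u. (norm (a u))^3)"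
        and B3: "(\<integral>u. (norm (a u))^3 \<partial>M) \<le> max 0 (C (3/2) * ln (real N) * n^3 + C (3/2) * ln (real N) / real N powr (3 * \<sigma>))"
        using intb[OF _ _ h3] by auto
      define X1 where "X1 = ln (real N) * F"
      define X2 where "X2 = ln (real N) * F^2 / real N powr (2 * \<sigma>)"
      define X3 where "X3 = ln (real N) * F powr (5/2) / real N powr (3 * \<sigma>)"
      have X: "X1 \<ge> 0" "X2 \<ge> 0" "X3 \<ge> 0" unfolding X1_def X2_def X3_def using lnN Fb(3) by auto
      have B2': "F^2 * (\<integral>u. (norm (a u))^2 \<partial>M) \<le> \<bar>C 1\<bar> * (X1 + X2)"
      proof -
        have "F^2 * (\<integral>u. (norm (a u))^2 \<partial>M) \<le> F^2 * max 0 (C 1 * ln (real N) * n^2 + C 1 * ln (real N) / real N powr (2 * \<sigma>))"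
          using B2 by (intro mult_left_mono) auto
        also have "\<dots> \<le> F^2 * (\<bar>C 1\<bar> * (ln (real N) * n^2 + ln (real N) / real N powr (2 * \<sigma>)))"
        proof -
          have "0 \<le> ln (real N) * n^2 + ln (real N) / real N powr (2 * \<sigma>)" using lnN by simp
          then have "C 1 * (ln (real N) * n^2 + ln (real N) / real N powr (2 * \<sigma>)) \<le> \<bar>C 1\<bar> * (ln (real N) * n^2 + ln (real N) / real N powr (2 * \<sigma>))"
            by (intro mult_right_mono) auto
          moreover have "0 \<le> \<bar>C 1\<bar> * (ln (real N) * n^2 + ln (real N) / real N powr (2 * \<sigma>))" using lnN by simp
          ultimately show ?thesis by (intro mult_left_mono) (auto simp: algebra_simps)
        qed
        also have "\<dots> = \<bar>C 1\<bar> * (ln (real N) * (F^2 * n^2) + X2)" unfolding X2_def by (simp add: algebra_simps)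
        also have "\<dots> \<le> \<bar>C 1\<bar> * (X1 + X2)" unfolding X1_def using Fb(1) lnN
          by (intro mult_left_mono) auto
        finally show ?thesis .
      qed
      have B3': "F powr (5/2) * (\<integral>u. (norm (a u))^3 \<partial>M) \<le> \<bar>C (3/2)\<bar> * (X1 + X3)"
      proof -
        have "F powr (5/2) * (\<integral>u. (norm (a u))^3 \<partial>M) \<le> F powr (5/2) * max 0 (C (3/2) * ln (real N) * n^3 + C (3/2) * ln (real N) / real N powr (3 * \<sigma>))"
          using B3 by (intro mult_left_mono) auto
        also have "\<dots> \<le> F powr (5/2) * (\<bar>C (3/2)\<bar> * (ln (real N) * n^3 + ln (real N) / real N powr (3 * \<sigma>)))"
        proof -
          have "0 \<le> ln (real N) * n^3 + ln (real N) / real N powr (3 * \<sigma>)" using lnN n0 by simp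
          then have "C (3/2) * (ln (real N) * n^3 + ln (real N) / real N powr (3 * \<sigma>)) \<le> \<bar>C (3/2)\<bar> * (ln (real N) * n^3 + ln (real N) / real N powr (3 * \<sigma>))"
            by (intro mult_right_mono) auto
          moreover have "0 \<le> \<bar>C (3/2)\<bar> * (ln (real N) * n^3 + ln (real N) / real N powr (3 * \<sigma>))" using lnN n0 by simp
          ultimately show ?thesis by (intro mult_left_mono) (auto simp: algebra_simps)
        qed
        also have "\<dots> = \<bar>C (3/2)\<bar> * (ln (real N) * (F powr (5/2) * n^3) + X3)" unfolding X3_def by (simp add: algebra_simps)
        also have "\<dots> \<le> \<bar>C (3/2)\<bar> * (X1 + X3)" unfolding X1_def using Fb(2) lnN
          by (intro mult_left_mono) auto
        finally show ?thesis .
      qed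
      have IG: "integrable M G" unfolding G_def using I2 I3 by auto
      have Ig: "integrable M g"
        by (rule Bochner_Integration.integrable_bound[OF IG gm]) (use gG in \<open>auto intro!: AE_I2 order_trans[OF _ abs_ge_self]\<close>)
      have "(\<integral>u. g u \<partial>M) \<le> (\<integral>u. G u \<partial>M)"
        using Ig IG gG by (intro integral_mono) (auto dest: abs_le_D1)
      also have "(\<integral>u. G u \<partial>M) = L * (5 * (F^2 * (\<integral>u. (norm (a u))^2 \<partial>M)) + 2 * (F powr (5/2) * (\<integral>u. (norm (a u))^3 \<partial>M)))"
        unfolding G_def using I2 I3 by (simp add: algebra_simps)
      also have "\<dots> \<le> L * (5 * (\<bar>C 1\<bar> * (X1 + X2)) + 2 * (\<bar>C (3/2)\<bar> * (X1 + X3)))"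
        using B2' B3' Lp by (intro mult_left_mono add_mono) auto
      also have "\<dots> \<le> c' * (X1 + X2 + X3)"
      proof -
        have "\<bar>C 1\<bar> * (X1 + X2) \<le> \<bar>C 1\<bar> * (X1 + X2 + X3)" using X by (intro mult_left_mono) auto
        moreover have "\<bar>C (3/2)\<bar> * (X1 + X3) \<le> \<bar>C (3/2)\<bar> * (X1 + X2 + X3)" using X by (intro mult_left_mono) auto
        ultimately have "5 * (\<bar>C 1\<bar> * (X1 + X2)) + 2 * (\<bar>C (3/2)\<bar> * (X1 + X3)) \<le> (5 * \<bar>C 1\<bar> + 2 * \<bar>C (3/2)\<bar>) * (X1 + X2 + X3)"
          by (simp add: algebra_simps)
        thus ?thesis unfolding c'_def using Lp by (simp add: mult.assoc mult_left_mono)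
      qed
      finally have bd: "(\<integral>u. g u \<partial>M) \<le> c' * (X1 + X2 + X3)" .
      show "let g = (\<lambda>u. Fe e (x - x' + h x u - h x' u) - Fe e (x - x')
                          - grad (Fe e) (x - x') \<bullet> (h x u - h x' u))
             in integrable M g \<and>
                (\<integral>u. g u \<partial>M) \<le> c' * (ln (real N) * Fe e (x - x')
                   + ln (real N) * (Fe e (x - x'))^2 / real N powr (2 * \<sigma>)
                   + ln (real N) * (Fe e (x - x')) powr (5/2) / real N powr (3 * \<sigma>))"
        unfolding Let_def g_def[symmetric] using Ig bd unfolding X1_def X2_def X3_def F_def z_def by simp
    qed
  qed
qed


end
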